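(* Let $n$ be even, $k\ge1$, $q=2^k$, and $f(x)=a_0(x)+2a_1(x)+\cdots+2^{k-1}a_{k-1}(x)$ from $\mathbb{V}_n$ to $\mathbb{Z}_{2^k}$ with Boolean $a_j$. Then $f$ is $\mathbb{Z}_q$-bent if and only if for every $t=0,1,\ldots,k-1$ the function $f_t(x)=a_0(x)+2a_1(x)+\cdots+2^{k-t-1}a_{k-t-1}(x)$, regarded as a function from $\mathbb{V}_n$ to $\mathbb{Z}_{2^{k-t}}$, is gbent.
   Context: $\mathbb{V}_n$ is an $n$-dimensional $\mathbb{F}_2$-vector space with inner product $u\cdot x$. For $g:\mathbb{V}_n\to\mathbb{Z}_{2^m}$, $g$ is gbent if $|\sum_x\zeta_{2^m}^{g(x)}(-1)^{u\cdot x}|=2^{n/2}$ for all $u$, $\zeta_{2^m}=e^{2\pi i/2^m}$ (for $m=1$ this is ordinary bentness). $f:\mathbb{V}_n\to\mathbb{Z}_q$ is $\mathbb{Z}_q$-bent if $|\sum_{x\in\mathbb{V}_n}\zeta_q^{af(x)}(-1)^{u\cdot x}|=2^{n/2}$ for every $u\in\mathbb{V}_n$ and every nonzero $a\in\mathbb{Z}_q$. *)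

theory Defs
  imports "HOL-Analysis.Analysis"
begin

definition Vn :: "nat \<Rightarrow> bool list set" where
  "Vn n = {x. length x = n}"

definition dotp :: "bool list \<Rightarrow> bool list \<Rightarrow> nat" where
  "dotp u x = card {i. i < length x \<and> u ! i \<and> x ! i} mod 2"

definition zeta :: "nat \<Rightarrow> complex" where
  "zeta q = cis (2 * pi / real q)"

text \<open>Walsh-type transform of g : V_n \<rightarrow> Z_q (values taken as integers, read mod q).\<close>
definition walsh :: "nat \<Rightarrow> nat \<Rightarrow> (bool list \<Rightarrow> int) \<Rightarrow> bool list \<Rightarrow> complex" where
  "walsh q n g u = (\<Sum>x\<in>Vn n. zeta q powi g x * (-1) ^ dotp u x)"

definition gbent :: "nat \<Rightarrow> nat \<Rightarrow> (bool list \<Rightarrow> int) \<Rightarrow> bool" where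
  "gbent m n g \<longleftrightarrow> (\<forall>u\<in>Vn n. norm (walsh (2^m) n g u) = 2 powr (real n / 2))"

definition Zq_bent :: "nat \<Rightarrow> nat \<Rightarrow> (bool list \<Rightarrow> int) \<Rightarrow> bool" where
  "Zq_bent q n f \<longleftrightarrow> (\<forall>u\<in>Vn n. \<forall>a::int. 0 < a \<and> a < int q \<longrightarrow>
      norm (walsh q n (\<lambda>x. a * f x) u) = 2 powr (real n / 2))"

end

theory Submission imports Defs "HOL-Computational_Algebra.Polynomial" begin

definition ci :: "int poly \<Rightarrow> complex poly" where "ci p = map_poly of_int p"

lemma ci_add[simp]: "ci (p+q) = ci p + ci q"
  by (rule poly_eqI) (simp add: ci_def coeff_map_poly)
lemma ci_diff[simp]: "ci (p-q) = ci p - ci q"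
  by (rule poly_eqI) (simp add: ci_def coeff_map_poly)
lemma ci_mult[simp]: "ci (p*q) = ci p * ci q"
  by (rule poly_eqI) (simp add: ci_def coeff_map_poly coeff_mult)
lemma ci_smult[simp]: "ci (smult c p) = smult (of_int c) (ci p)"
  by (rule poly_eqI) (simp add: ci_def coeff_map_poly)
lemma ci_const[simp]: "ci [:c:] = [:of_int c:]"
  by (rule poly_eqI) (simp add: ci_def coeff_map_poly coeff_pCons split: nat.splits)
lemma ci_one[simp]: "ci 1 = 1"
  by (simp add: ci_def)
lemma ci_pCons[simp]: "ci (pCons a p) = pCons (of_int a) (ci p)"
  by (simp add: ci_def map_poly_pCons)
lemma ci_power[simp]: "ci (p^n) = ci p ^ n"
  by (induction n) auto
lemma ci_0[simp]: "ci 0 = 0" by (simp add: ci_def)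
lemma ci_sum[simp]: "ci (\<Sum>x\<in>A. f x) = (\<Sum>x\<in>A. ci (f x))"
  by (induction A rule: infinite_finite_induct) simp_all
lemma ci_zero[simp]: "ci p = 0 \<longleftrightarrow> p = 0"
  by (auto simp: ci_def map_poly_eq_0_iff)

lemma parity_low:
  fixes A B E :: "int poly"
  assumes "A * B = E" "odd (coeff B 0)" "\<forall>j<N. even (coeff E j)"
  shows "\<forall>j<N. even (coeff A j)"
proof -
  have "j < N \<longrightarrow> even (coeff A j)" for j
  proof (induction j rule: less_induct)
    case (less j)
    show ?case
    proof
      assume jN: "j < N"
      have "coeff E j = (\<Sum>i\<le>j. coeff A i * coeff B (j - i))"
        using assms(1) coeff_mult by metis
      also have "\<dots> = (\<Sum>i<j. coeff A i * coeff B (j - i)) + coeff A j * coeff B 0"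
        by (simp add: lessThan_Suc_atMost[symmetric])
      finally have eq: "coeff E j = (\<Sum>i<j. coeff A i * coeff B (j - i)) + coeff A j * coeff B 0" .
      have "even (\<Sum>i<j. coeff A i * coeff B (j - i))"
        using less jN by (intro dvd_sum) auto
      moreover have "even (coeff E j)" using assms(3) jN by auto
      ultimately have "even (coeff A j * coeff B 0)" using eq by (metis dvd_add_right_iff)
      then show "even (coeff A j)" using assms(2) by auto
    qed
  qed
  then show ?thesis by auto
qed

lemma pow2_rep: "\<exists>S. ([:1,1:]::int poly)^(2^r) = monom 1 (2^r) + 1 + smult 2 S"
proof (induction r)
  case 0
  show ?case by (rule exI[of _ 0]) (simp add: monom_Suc monom_0 one_pCons)
next
  case (Suc r)
  then obtain S where S: "([:1,1:]::int poly)^(2^r) = monom 1 (2^r) + 1 + smult 2 S" by blast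
  let ?X = "monom (1::int) (2^r)"
  have "([:1,1:]::int poly)^(2^Suc r) = (?X + 1 + smult 2 S)^2"
    by (simp add: S[symmetric] power_mult[symmetric] mult.commute)
  also have "\<dots> = ?X * ?X + 1 + smult 2 (?X + smult 2 (?X * S) + smult 2 S + smult 2 (S * S))"
  proof -
    have two: "\<And>p::int poly. smult 2 p = 2 * p" by (simp add: numeral_poly)
    show ?thesis by (simp only: two) (simp add: power2_eq_square algebra_simps)
  qed
  also have "?X * ?X = monom 1 (2^Suc r)" by (simp add: mult_monom mult_2)
  finally show ?case by blast
qed

lemma E_facts:
  fixes N :: nat assumes N: "N = 2^r"
  defines "E \<equiv> ([:1,1:]::int poly)^N + 1"
  shows "degree E = N" "coeff E N = 1" "coeff E 0 = 2" "\<forall>j<N. even (coeff E j)"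
    "\<And>y. poly (ci E) y = (y+1)^N + 1"
proof -
  have N0: "N > 0" using N by simp
  have dA: "degree (([:1,1:]::int poly)^N) = N" by (subst degree_power_eq) auto
  show dE: "degree E = N" unfolding E_def using N0 dA by (subst degree_add_eq_left) auto
  have "coeff (([:1,1:]::int poly)^N) N = 1"
    using lead_coeff_power[of "[:1,1:]::int poly" N] dA by simp
  then show "coeff E N = 1" using N0 by (simp add: E_def)
  show c0: "coeff E 0 = 2" unfolding E_def poly_0_coeff_0[symmetric] by simp
  obtain S where S: "([:1,1:]::int poly)^N = monom 1 N + 1 + smult 2 S" using pow2_rep[of r] N by blast
  show "\<forall>j<N. even (coeff E j)"
  proof (intro allI impI)
    fix j assume "j < N"
    show "even (coeff E j)"
    proof (cases "j = 0")
      case True then show ?thesis using c0 by simp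
    next
      case False then show ?thesis using \<open>j<N\<close> by (simp add: E_def S coeff_monom numeral_poly coeff_pCons split: nat.split)
    qed
  qed
  show "\<And>y. poly (ci E) y = (y+1)^N + 1" by (simp add: E_def algebra_simps)
qed

lemma key_alg:
  fixes N :: nat and w y :: complex and R :: "int poly"
  assumes N: "N = 2^r" and R: "poly (ci R) w = 0" and w: "(w+1)^N + 1 = 0" and y: "(y+1)^N + 1 = 0"
  shows "poly (ci R) y = 0"
proof -
  define E where "E = ([:1,1:]::int poly)^N + 1"
  note EF = E_facts[OF N, folded E_def]
  have N0: "N > 0" using N by simp
  have Ew: "poly (ci E) w = 0" using EF(5) w by simp
  have E0: "E \<noteq> 0" using EF(2) by auto
  have ex: "\<exists>d P. P \<noteq> 0 \<and> poly (ci P) w = 0 \<and> degree P = d" using Ew E0 by blast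
  define d where "d = (LEAST d. \<exists>P. P \<noteq> 0 \<and> poly (ci P) w = 0 \<and> degree P = d)"
  obtain P0 where P0: "P0 \<noteq> 0" "poly (ci P0) w = 0" "degree P0 = d"
    using LeastI_ex[OF ex] unfolding d_def by blast
  have minim: "d \<le> degree Q" if "Q \<noteq> 0" "poly (ci Q) w = 0" for Q
    unfolding d_def using that by (intro Least_le) blast
  define P where "P = primitive_part P0"
  have P: "P \<noteq> 0" "degree P = d" "content P = 1" using P0 by (auto simp: P_def)
  have "poly (ci P0) w = of_int (content P0) * poly (ci P) w"
    by (subst content_times_primitive_part[of P0, symmetric]) (simp only: ci_smult poly_smult P_def)
  then have Pw: "poly (ci P) w = 0" using P0 by (simp add: content_eq_zero_iff)
  have divides: "\<exists>c Q. c \<noteq> 0 \<and> smult c S = P * Q" if Sw: "poly (ci S) w = 0" for S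
  proof -
    obtain q r where qr: "pseudo_divmod S P = (q, r)" by (cases "pseudo_divmod S P") auto
    define c where "c = coeff P (degree P) ^ (Suc (degree S) - degree P)"
    have c0: "c \<noteq> 0" using P(1) by (simp add: c_def)
    have eq: "smult c S = P * q + r" using pseudo_divmod(1)[OF P(1) qr] by (simp add: c_def)
    have "poly (ci (smult c S)) w = poly (ci (P * q + r)) w" by (simp only: eq)
    then have rw: "poly (ci r) w = 0" using Sw Pw by simp
    have "r = 0"
    proof (rule ccontr)
      assume "r \<noteq> 0"
      then have "degree r < degree P" using pseudo_divmod(2)[OF P(1) qr] by auto
      moreover have "d \<le> degree r" using minim[OF \<open>r \<noteq> 0\<close> rw] .
      ultimately show False using P(2) by simp
    qed
    then show ?thesis using eq c0 by auto
  qed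
  obtain c Q where cQ: "c \<noteq> 0" "smult c E = P * Q" using divides[OF Ew] by blast
  have cE: "content E = 1"
  proof -
    have "content E dvd 1" using content_dvd_coeff[of E N] EF(2) by simp
    then show ?thesis by (metis is_unit_content_iff)
  qed
  have "content Q = \<bar>c\<bar>"
  proof -
    have "content (smult c E) = content (P * Q)" using cQ by simp
    then show ?thesis using cE P(3) by (simp add: content_mult)
  qed
  then have "smult c E = smult \<bar>c\<bar> (P * primitive_part Q)"
    using cQ(2) content_times_primitive_part[of Q] by (metis mult_smult_right)
  also have "\<bar>c\<bar> = c * sgn c" by (simp add: abs_sgn mult.commute)
  finally have "smult c E = smult c (smult (sgn c) (P * primitive_part Q))" by simp
  then have "E = smult (sgn c) (P * primitive_part Q)" using smult_cancel[OF cQ(1)] by blast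
  then obtain Q' where EPQ: "E = P * Q'" by (metis mult_smult_right)
  have Q'0: "Q' \<noteq> 0" using E0 EPQ by auto
  have degs: "N = d + degree Q'" using EF(1) EPQ P Q'0 degree_mult_eq by metis
  have d1: "d \<ge> 1"
  proof (rule ccontr)
    assume "\<not> d \<ge> 1"
    then have "degree P = 0" using P(2) by simp
    then obtain a where "P = [:a:]" by (metis degree_eq_zeroE)
    then show False using Pw P(1) by simp
  qed
  have c00: "coeff P 0 * coeff Q' 0 = 2" using EF(3) EPQ by (simp add: coeff_mult)
  have "d = N"
  proof (cases "odd (coeff Q' 0)")
    case True
    have evP: "\<forall>j<N. even (coeff P j)" using parity_low[OF EPQ[symmetric] True EF(4)] .
    show ?thesis
    proof (rule ccontr)
      assume "d \<noteq> N"
      then have "d < N" using degs by simp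
      have "\<forall>j. 2 dvd coeff P j"
      proof
        fix j show "2 dvd coeff P j"
          using evP \<open>d < N\<close> P(2) by (cases "j < N") (auto simp: coeff_eq_0)
      qed
      then have "2 dvd content P"
        using const_poly_dvd_iff const_poly_dvd_iff_dvd_content by metis
      then show False using P(3) by simp
    qed
  next
    case False
    have "odd (coeff P 0)"
    proof
      assume "even (coeff P 0)"
      then have "(2*2) dvd coeff P 0 * coeff Q' 0" using False by (intro mult_dvd_mono) auto
      then show False using c00 by simp
    qed
    then have evQ: "\<forall>j<N. even (coeff Q' j)"
      using parity_low[of Q' P E N] EPQ EF(4) by (simp add: mult.commute)
    have "degree Q' < N" using degs d1 by simp
    then have "even (coeff Q' (degree Q'))" using evQ by simp
    moreover have "coeff E (degree E) = coeff P (degree P) * coeff Q' (degree Q')"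
      using EPQ lead_coeff_mult by metis
    ultimately have "even (coeff E (degree E))" by simp
    then show ?thesis using EF(1,2) by simp
  qed
  then have "degree Q' = 0" using degs by simp
  then obtain q0 where q0: "Q' = [:q0:]" by (metis degree_eq_zeroE)
  have "q0 \<noteq> 0" using Q'0 q0 by simp
  have "poly (ci E) y = 0" using EF(5) y by simp
  then have Py: "poly (ci P) y = 0" using EPQ q0 \<open>q0 \<noteq> 0\<close> by simp
  obtain c2 Q2 where c2: "c2 \<noteq> 0" "smult c2 R = P * Q2" using divides[OF R] by blast
  have "poly (ci (smult c2 R)) y = 0" using c2(2) Py by simp
  then show ?thesis using c2(1) by simp
qed

lemma zeta_pow: "zeta q powi z = cis (2 * pi * of_int z / real q)"
  by (simp add: zeta_def cis_power_int mult.commute)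

lemma cis_period: "n \<in> \<int> \<Longrightarrow> cis (a + 2 * pi * n) = cis a"
  by (simp add: cis_mult[symmetric])

lemma norm_powr_iff: "0 \<le> (r::real) \<Longrightarrow> r = 2 powr (real n / 2) \<longleftrightarrow> r^2 = 2^n"
proof -
  assume r: "0 \<le> r"
  have "(2 powr (real n / 2))^2 = (2::real)^n"
    by (simp add: powr_realpow[symmetric] powr_powr[symmetric] power2_eq_square powr_add[symmetric])
  then show ?thesis using r by (metis power2_eq_iff_nonneg powr_ge_zero)
qed

lemma oddmult:
  fixes g :: "bool list \<Rightarrow> int" and b m :: nat
  assumes m: "m \<ge> 1" and g: "\<forall>x. 0 \<le> g x" and b: "odd b"
    and h: "norm (walsh (2^m) n g u) = 2 powr (real n / 2)"
  shows "norm (walsh (2^m) n (\<lambda>x. int b * g x) u) = 2 powr (real n / 2)"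
proof -
  define M :: nat where "M = 2^m"
  define N :: nat where "N = 2^(m-1)"
  have MN: "M = 2 * N" using m by (simp add: M_def N_def power_Suc[symmetric])
  have M0: "M > 0" by (simp add: M_def)
  define z where "z = cis (2 * pi / real M)"
  define W where "W c = (\<Sum>x\<in>Vn n. (-1) ^ dotp u x * (z ^ c) ^ nat (g x))" for c :: nat
  have Wc: "walsh (2^m) n (\<lambda>x. int c * g x) u = W c" for c
    unfolding walsh_def W_def
  proof (rule sum.cong[OF refl])
    fix x
    have e: "int c * g x = int (c * nat (g x))" using g by simp
    have zz: "zeta (2^m) = z" by (simp add: zeta_def z_def M_def)
    have "zeta (2^m) powi (int c * g x) = z powi int (c * nat (g x))"
      by (simp only: e zz)
    also have "\<dots> = (z ^ c) ^ nat (g x)" by (simp only: power_int_of_nat power_mult)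
    finally show "zeta (2^m) powi (int c * g x) * (-1) ^ dotp u x = (-1) ^ dotp u x * (z ^ c) ^ nat (g x)"
      by simp
  qed
  have conj: "(z ^ c) ^ ((M - 1) * j) = cnj ((z ^ c) ^ j)" for c j :: nat
  proof -
    have "(z ^ c) ^ ((M - 1) * j) = z ^ ((M - 1) * j * c)"
      by (simp only: power_mult[symmetric] mult.commute)
    also have "\<dots> = cis (real ((M - 1) * j * c) * (2 * pi / real M))"
      by (simp only: z_def Complex.DeMoivre)
    also have "real ((M - 1) * j * c) * (2 * pi / real M) = - (real (j * c) * (2 * pi / real M)) + 2 * pi * real (j*c)"
      using M0 by (simp add: of_nat_diff field_simps)
    also have "cis \<dots> = cis (- (real (j * c) * (2 * pi / real M)))" by (rule cis_period) simp
    also have "\<dots> = cnj (z ^ (j * c))"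
      by (simp only: z_def Complex.DeMoivre cis_cnj)
    also have "\<dots> = cnj ((z ^ c) ^ j)"
      by (simp only: power_mult[symmetric] mult.commute)
    finally show ?thesis .
  qed
  define P :: "int poly" where "P = (\<Sum>x\<in>Vn n. smult ((-1) ^ dotp u x) ([:1,1:] ^ nat (g x)))"
  define Pt :: "int poly" where "Pt = (\<Sum>x\<in>Vn n. smult ((-1) ^ dotp u x) ([:1,1:] ^ ((M - 1) * nat (g x))))"
  define R where "R = P * Pt - [:2^n:]"
  have evR: "poly (ci R) (z ^ c - 1) = W c * cnj (W c) - 2 ^ n" for c
  proof -
    have "poly (ci P) (z ^ c - 1) = W c" by (simp add: P_def W_def poly_sum)
    moreover have "poly (ci Pt) (z ^ c - 1) = cnj (W c)"
    proof -
      have "poly (ci Pt) (z ^ c - 1) = (\<Sum>x\<in>Vn n. (-1) ^ dotp u x * (z ^ c) ^ ((M - 1) * nat (g x)))"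
        by (simp add: Pt_def poly_sum)
      also have "\<dots> = (\<Sum>x\<in>Vn n. (-1) ^ dotp u x * cnj ((z ^ c) ^ nat (g x)))"
        by (simp only: conj)
      also have "\<dots> = cnj (W c)" by (simp add: W_def cnj_sum)
      finally show ?thesis .
    qed
    ultimately show ?thesis by (simp add: R_def)
  qed
  have W1: "W 1 * cnj (W 1) = 2 ^ n"
  proof -
    have "norm (W 1) ^ 2 = 2 ^ n" using h Wc[of 1] norm_powr_iff by simp
    then have "complex_of_real (norm (W 1) ^ 2) = 2 ^ n" by (metis of_real_numeral of_real_power)
    then show ?thesis by (metis complex_norm_square)
  qed
  have zN: "z ^ N = -1"
  proof -
    have "z ^ N = cis (real N * (2 * pi / real M))" by (simp add: z_def Complex.DeMoivre)
    also have "real N * (2 * pi / real M) = pi" using MN M0 by simp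
    finally show ?thesis by simp
  qed
  have "poly (ci R) (z ^ b - 1) = 0"
  proof (rule key_alg[of N "m - 1" R "z - 1"])
    show "N = 2 ^ (m - 1)" by (simp add: N_def)
    show "poly (ci R) (z - 1) = 0" using evR[of 1] W1 by simp
    show "(z - 1 + 1) ^ N + 1 = 0" using zN by simp
    show "(z ^ b - 1 + 1) ^ N + 1 = 0" using zN b by (simp add: power_mult[symmetric] mult.commute power_mult)
  qed
  then have "W b * cnj (W b) = 2 ^ n" using evR[of b] by simp
  then have "complex_of_real (norm (W b) ^ 2) = complex_of_real (2 ^ n)" by (metis complex_norm_square of_real_numeral of_real_power)
  then have "norm (W b) ^ 2 = 2 ^ n" using of_real_eq_iff by blast
  then show ?thesis using Wc[of b] norm_powr_iff by simp
qed

lemma dec2: "(a::nat) > 0 \<Longrightarrow> \<exists>t b. a = 2^t * b \<and> odd b"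
proof (induction a rule: less_induct)
  case (less a)
  show ?case
  proof (cases "odd a")
    case True then show ?thesis by (intro exI[of _ 0] exI[of _ a]) auto
  next
    case False
    then obtain a' where a': "a = 2 * a'" by blast
    then have "a' < a" "a' > 0" using less.prems by auto
    then obtain t b where "a' = 2^t * b" "odd b" using less.IH by blast
    then show ?thesis using a' by (intro exI[of _ "Suc t"] exI[of _ b]) auto
  qed
qed

lemma fdiff:
  fixes a :: "nat \<Rightarrow> bool list \<Rightarrow> bool"
  assumes "t \<le> k"
  shows "(2::int)^(k-t) dvd (\<Sum>j<k. 2^j * of_bool (a j x)) - (\<Sum>j<k-t. 2^j * of_bool (a j x))"
proof -
  have "(\<Sum>j<k. (2::int)^j * of_bool (a j x)) = (\<Sum>j<k-t. 2^j * of_bool (a j x)) + (\<Sum>j\<in>{k-t..<k}. 2^j * of_bool (a j x))"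
    unfolding lessThan_atLeast0 by (rule sum.atLeastLessThan_concat[symmetric]) auto
  moreover have "(2::int)^(k-t) dvd (\<Sum>j\<in>{k-t..<k}. 2^j * of_bool (a j x))"
    by (intro dvd_sum) (auto intro: dvd_mult2 le_imp_power_dvd)
  ultimately show ?thesis by simp
qed

lemma walsh_eq:
  fixes h1 h2 :: "bool list \<Rightarrow> int"
  assumes "t < k" "\<forall>x. (2::int)^(k-t) dvd h1 x - h2 x"
  shows "walsh (2^k) n (\<lambda>x. 2^t * c * h1 x) u = walsh (2^(k-t)) n (\<lambda>x. c * h2 x) u"
  unfolding walsh_def
proof (rule sum.cong[OF refl])
  fix x
  obtain s where s: "h1 x - h2 x = 2^(k-t) * s" using assms(2) by blast
  define D :: real where "D = 2^(k-t)"
  define T :: real where "T = 2^t"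
  have kk: "real (2^k) = T * D" using assms(1) by (simp add: T_def D_def power_add[symmetric])
  have D0: "D > 0" "T > 0" by (simp_all add: D_def T_def)
  have h1: "real_of_int (h1 x) = real_of_int (h2 x) + D * real_of_int s"
    using arg_cong[OF s, of real_of_int] by (simp add: D_def)
  have "2 * pi * real_of_int (2^t * c * h1 x) / real (2^k) = 2 * pi * real_of_int (c * h2 x) / real (2^(k-t)) + 2 * pi * real_of_int (c * s)"
    unfolding kk using D0 by (simp add: h1 T_def[symmetric] D_def[symmetric] field_simps)
  then have "zeta (2^k) powi (2^t * c * h1 x) = zeta (2^(k-t)) powi (c * h2 x)"
    by (simp only: zeta_pow cis_period Ints_of_int)
  then show "zeta (2^k) powi (2^t * c * h1 x) * (-1) ^ dotp u x = zeta (2^(k-t)) powi (c * h2 x) * (-1) ^ dotp u x"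
    by simp
qed

theorem proposition5:
  fixes n k :: nat and a :: "nat \<Rightarrow> bool list \<Rightarrow> bool"
  assumes "even n" and "k \<ge> 1"
  shows "Zq_bent (2^k) n (\<lambda>x. \<Sum>j<k. 2^j * of_bool (a j x))
     \<longleftrightarrow> (\<forall>t<k. gbent (k - t) n (\<lambda>x. \<Sum>j<k - t. 2^j * of_bool (a j x)))"
proof
  assume Z: "Zq_bent (2^k) n (\<lambda>x. \<Sum>j<k. 2^j * of_bool (a j x))"
  show "\<forall>t<k. gbent (k - t) n (\<lambda>x. \<Sum>j<k - t. 2^j * of_bool (a j x))"
  proof (intro allI impI)
    fix t assume t: "t < k"
    show "gbent (k - t) n (\<lambda>x. \<Sum>j<k - t. 2^j * of_bool (a j x))"
      unfolding gbent_def
    proof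
      fix u assume u: "u \<in> Vn n"
      have "0 < (2::int)^t" "(2::int)^t < int (2^k)" using t by (auto intro: power_strict_increasing)
      then have "norm (walsh (2^k) n (\<lambda>x. 2^t * (\<Sum>j<k. 2^j * of_bool (a j x))) u) = 2 powr (real n / 2)"
        using Z u unfolding Zq_bent_def by blast
      moreover have "walsh (2^k) n (\<lambda>x. 2^t * 1 * (\<Sum>j<k. 2^j * of_bool (a j x))) u
          = walsh (2^(k-t)) n (\<lambda>x. 1 * (\<Sum>j<k - t. 2^j * of_bool (a j x))) u"
        using t fdiff[of t k a] by (intro walsh_eq) auto
      ultimately show "norm (walsh (2^(k-t)) n (\<lambda>x. \<Sum>j<k - t. 2^j * of_bool (a j x)) u) = 2 powr (real n / 2)"
        by simp
    qed
  qed
next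
  assume G: "\<forall>t<k. gbent (k - t) n (\<lambda>x. \<Sum>j<k - t. 2^j * of_bool (a j x))"
  show "Zq_bent (2^k) n (\<lambda>x. \<Sum>j<k. 2^j * of_bool (a j x))"
    unfolding Zq_bent_def
  proof (intro ballI allI impI)
    fix u :: "bool list" and c :: int
    assume u: "u \<in> Vn n" and c: "0 < c \<and> c < int (2^k)"
    obtain t b where tb: "nat c = 2^t * b" "odd b" using dec2[of "nat c"] c by auto
    have cc: "c = 2^t * int b" using tb c by (metis int_nat_eq less_imp_le of_nat_mult of_nat_numeral of_nat_power)
    have "(2::int)^t \<le> c" using cc tb(2) by (cases b) auto
    then have "(2::int)^t < 2^k" using c by (simp only: of_nat_power of_nat_numeral) linarith
    then have t: "t < k" by (rule power_less_imp_less_exp[rotated]) simp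
    have "walsh (2^k) n (\<lambda>x. c * (\<Sum>j<k. 2^j * of_bool (a j x))) u
        = walsh (2^k) n (\<lambda>x. 2^t * int b * (\<Sum>j<k. 2^j * of_bool (a j x))) u" by (simp add: cc)
    also have "\<dots> = walsh (2^(k-t)) n (\<lambda>x. int b * (\<Sum>j<k - t. 2^j * of_bool (a j x))) u"
      using t fdiff[of t k a] by (intro walsh_eq) auto
    finally have eq: "walsh (2^k) n (\<lambda>x. c * (\<Sum>j<k. 2^j * of_bool (a j x))) u
        = walsh (2^(k-t)) n (\<lambda>x. int b * (\<Sum>j<k - t. 2^j * of_bool (a j x))) u" .
    have base: "norm (walsh (2^(k-t)) n (\<lambda>x. \<Sum>j<k - t. 2^j * of_bool (a j x)) u) = 2 powr (real n / 2)"
      using G t u unfolding gbent_def by blast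
    have "norm (walsh (2^(k-t)) n (\<lambda>x. int b * (\<Sum>j<k - t. 2^j * of_bool (a j x))) u) = 2 powr (real n / 2)"
      by (rule oddmult[OF _ _ tb(2) base]) (use t in \<open>auto intro: sum_nonneg\<close>)
    then show "norm (walsh (2^k) n (\<lambda>x. c * (\<Sum>j<k. 2^j * of_bool (a j x))) u) = 2 powr (real n / 2)"
      using eq by simp
  qed
qed

end
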